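(* Let $C$ be a real matrix and $h,\Delta$ real vectors of compatible dimensions with $\Delta_i\ge0$ for all $i$. Let $\Omega_1=\{x:Cx\le h\}$ and $\Omega_2=\{x:Cx\le h-\Delta\}$. Let $f$ be a convex function that is $L$-Lipschitz continuous on $\Omega_1$. Suppose $\Omega_1$ is bounded with $\sup_{x_1,x_1'\in\Omega_1}\|x_1-x_1'\|_2\le\delta_1$, and $\Omega_2$ is non-empty, containing some point $\mathring x$. Then $$\Big|\min_{x\in\Omega_1}f(x)-\min_{x\in\Omega_2}f(x)\Big|\le\frac{L\delta_1\|\Delta\|_\infty}{\min_{\{i:\Delta_i>0\}}(h-C\mathring x)_i}.$$
   Context: Inequalities between vectors are entrywise; $\|\Delta\|_\infty=\max_i|\Delta_i|$. *)

theory Defs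
  imports "HOL-Analysis.Analysis"
begin

end

theory Submission
  imports Defs
begin

lemma mv_comb:
  fixes C :: "real ^ 'n ^ 'm"
  shows "(C *v ((1 - t) *\<^sub>R x + t *\<^sub>R z)) $ i = (1 - t) * (C *v x) $ i + t * (C *v z) $ i"
  by (simp add: matrix_vector_right_distrib matrix_vector_mult_scaleR)

lemma comb_ineq:
  fixes a b hh d t m M :: real
  assumes "a \<le> hh" "b \<le> hh - d" "0 \<le> t" "t \<le> 1" "d \<ge> 0"
    and "d > 0 \<Longrightarrow> hh - b \<ge> m" "t * m = M" "d \<le> M" "m > 0"
  shows "(1 - t) * a + t * b \<le> hh - d"
proof (cases "d > 0")
  case True
  have "(1 - t) * a \<le> (1 - t) * hh" using assms by (intro mult_left_mono) auto
  moreover have "t * m \<le> t * (hh - b)" using assms True by (intro mult_left_mono) auto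
  ultimately show ?thesis using assms by (auto simp: algebra_simps)
next
  case False
  then have "d = 0" using assms by auto
  have "(1 - t) * a \<le> (1 - t) * hh" using assms by (intro mult_left_mono) auto
  moreover have "t * b \<le> t * hh" using assms \<open>d = 0\<close> by (intro mult_left_mono) auto
  ultimately show ?thesis using assms \<open>d = 0\<close> by (auto simp: algebra_simps)
qed

theorem proposition2:
  fixes C :: "real ^ 'n ^ 'm" and h \<Delta> :: "real ^ 'm"
    and f :: "real ^ 'n \<Rightarrow> real" and L \<delta>1 :: real and x0 :: "real ^ 'n"
    and \<Omega>1 \<Omega>2 :: "(real ^ 'n) set"
  assumes \<Delta>_nonneg: "\<And>i. \<Delta> $ i \<ge> 0"
    and \<Omega>1_def: "\<Omega>1 = {x. C *v x \<le> h}"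
    and \<Omega>2_def: "\<Omega>2 = {x. C *v x \<le> h - \<Delta>}"
    and f_convex: "convex_on UNIV f"
    and f_lip: "L-lipschitz_on \<Omega>1 f"
    and \<Omega>1_bounded: "bounded \<Omega>1"
    and diam: "\<forall>x1\<in>\<Omega>1. \<forall>x1'\<in>\<Omega>1. norm (x1 - x1') \<le> \<delta>1"
    and x0_in: "x0 \<in> \<Omega>2"
  shows "\<bar>(INF x\<in>\<Omega>1. f x) - (INF x\<in>\<Omega>2. f x)\<bar>
           \<le> L * \<delta>1 * (MAX i\<in>UNIV. \<bar>\<Delta> $ i\<bar>)
              / (MIN i\<in>{i. \<Delta> $ i > 0}. (h - C *v x0) $ i)"
proof -
  define M where "M = (MAX i\<in>UNIV. \<bar>\<Delta> $ i\<bar>)"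
  define S where "S = {i. \<Delta> $ i > 0}"
  define m where "m = (MIN i\<in>S. (h - C *v x0) $ i)"
  have L0: "L \<ge> 0" using f_lip by (rule lipschitz_on_nonneg)
  have sub: "\<Omega>2 \<subseteq> \<Omega>1"
    unfolding \<Omega>1_def \<Omega>2_def using \<Delta>_nonneg
    by (auto simp: less_eq_vec_def intro: order_trans)
  have x01: "x0 \<in> \<Omega>1" using sub x0_in by auto
  have d0: "\<delta>1 \<ge> 0" using diam x01 by (metis norm_ge_zero order_trans)
  have lipd: "f y \<le> f x + L * norm (y - x)" if "x \<in> \<Omega>1" "y \<in> \<Omega>1" for x y
    using lipschitz_onD[OF f_lip that(2) that(1)] by (auto simp: dist_real_def dist_norm)
  have bdd1: "bdd_below (f ` \<Omega>1)"
  proof (rule bdd_belowI2)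
    fix x assume x: "x \<in> \<Omega>1"
    have "f x0 \<le> f x + L * norm (x0 - x)" using lipd[OF x x01] .
    also have "L * norm (x0 - x) \<le> L * \<delta>1" using diam x x01 L0 by (intro mult_left_mono) auto
    finally show "f x0 - L * \<delta>1 \<le> f x" by simp
  qed
  have bdd2: "bdd_below (f ` \<Omega>2)" using bdd1 sub by (meson bdd_below_mono image_mono)
  have le1: "(INF x\<in>\<Omega>1. f x) \<le> (INF x\<in>\<Omega>2. f x)"
    using x0_in sub bdd1 by (intro cINF_superset_mono) auto
  have M0: "M \<ge> 0" unfolding M_def by (rule order_trans[OF abs_ge_zero[of "\<Delta> $ undefined"]]) auto
  show ?thesis
  proof (cases "S = {}")
    case True
    then have "\<Delta> = 0" using \<Delta>_nonneg unfolding S_def by (auto simp: vec_eq_iff) (metis less_eq_real_def)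
    then have "\<Omega>1 = \<Omega>2" unfolding \<Omega>1_def \<Omega>2_def by simp
    moreover have "M = 0" using \<open>\<Delta> = 0\<close> unfolding M_def by simp
    ultimately show ?thesis using M_def by simp
  next
    case False
    have finS: "finite S" by simp
    obtain j where j: "j \<in> S" "m = (h - C *v x0) $ j"
      unfolding m_def using False finS by (metis (no_types, lifting) Min_in finite_imageI image_iff image_is_empty)
    have x0c: "C *v x0 \<le> h - \<Delta>" using x0_in \<Omega>2_def by auto
    have "m \<ge> \<Delta> $ j" using x0c j by (auto simp: less_eq_vec_def) (smt (verit))
    then have mpos: "m > 0" using j S_def by auto
    have mle: "m \<le> (h - C *v x0) $ i" if "i \<in> S" for i
      unfolding m_def using that finS by auto
    have MgeD: "\<Delta> $ i \<le> M" for i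
      unfolding M_def by (rule order_trans[OF abs_ge_self]) auto
    define t where "t = M / m"
    have t0: "t \<ge> 0" using M0 mpos t_def by auto
    have tm: "t * m = M" using mpos t_def by auto
    have key: "(INF x\<in>\<Omega>2. f x) \<le> f x + L * \<delta>1 * t" if x: "x \<in> \<Omega>1" for x
    proof (cases "t \<le> 1")
      case True
      define y where "y = (1 - t) *\<^sub>R x + t *\<^sub>R x0"
      have "y \<in> \<Omega>2"
        unfolding \<Omega>2_def less_eq_vec_def
      proof (safe)
        fix i
        have a: "(C *v x) $ i \<le> h $ i" using x \<Omega>1_def by (auto simp: less_eq_vec_def)
        have b: "(C *v x0) $ i \<le> h $ i - \<Delta> $ i" using x0c by (auto simp: less_eq_vec_def)
        have c: "\<Delta> $ i > 0 \<Longrightarrow> h $ i - (C *v x0) $ i \<ge> m" using mle[of i] S_def by auto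
        show "(C *v y) $ i \<le> (h - \<Delta>) $ i"
          unfolding y_def mv_comb using comb_ineq[OF a b t0 True \<Delta>_nonneg c tm MgeD mpos] by simp
      qed
      then have y1: "y \<in> \<Omega>1" using sub by auto
      have "(INF x\<in>\<Omega>2. f x) \<le> f y" using bdd2 \<open>y \<in> \<Omega>2\<close> by (rule cINF_lower)
      also have "\<dots> \<le> f x + L * norm (y - x)" using lipd[OF x y1] .
      also have "y - x = t *\<^sub>R (x0 - x)" unfolding y_def by (simp add: algebra_simps)
      also have "norm (t *\<^sub>R (x0 - x)) = t * norm (x0 - x)" using t0 by simp
      also have "L * (t * norm (x0 - x)) \<le> L * (t * \<delta>1)"
        using diam x x01 L0 t0 by (intro mult_left_mono) auto
      finally show ?thesis by (simp add: algebra_simps)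
    next
      case False
      have "(INF x\<in>\<Omega>2. f x) \<le> f x0" using bdd2 x0_in by (rule cINF_lower)
      also have "\<dots> \<le> f x + L * norm (x0 - x)" using lipd[OF x x01] .
      also have "L * norm (x0 - x) \<le> L * \<delta>1" using diam x x01 L0 by (intro mult_left_mono) auto
      also have "L * \<delta>1 \<le> L * \<delta>1 * t" using False L0 d0
        by (metis mult_left_mono mult.right_neutral nle_le zero_le_mult_iff)
      finally show ?thesis by simp
    qed
    have "(INF x\<in>\<Omega>2. f x) - L * \<delta>1 * t \<le> (INF x\<in>\<Omega>1. f x)"
      using x01 key by (intro cINF_greatest) (auto simp: algebra_simps)
    then have "\<bar>(INF x\<in>\<Omega>1. f x) - (INF x\<in>\<Omega>2. f x)\<bar> \<le> L * \<delta>1 * t" using le1 by simp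
    then show ?thesis unfolding t_def M_def m_def S_def by simp
  qed
qed

end
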